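(* If $(f_m)$ is a Bessel sequence in $\mathcal{L}^2(I)$, then $(f_m*_T0)$ is also a Bessel sequence in $\mathcal{L}^2(I)$.
   Context: Let $N\ge 2$, $I=[x_0,x_N]$, $\Delta: x_0<\dots<x_N$ a partition, $L_n(x)=a_nx+b_n$ affine with $L_n(x_0)=x_{n-1}$, $L_n(x_N)=x_n$, $I_1=[x_0,x_1]$, $I_n=(x_{n-1},x_n]$ for $n\ge2$, and $\alpha=(\alpha_1,\dots,\alpha_N)\in(\mathcal{L}^\infty(I))^N$ with $\Lambda:=\operatorname{ess\,sup}\{|\alpha_n(x)|:x\in I,n=1,\dots,N\}<1$. For $f,b\in\mathcal{L}^2(I)$, $f*_Tb$ is the unique fixed point in $\mathcal{L}^2(I)$ of the contraction $Tg(x):=f(x)+\alpha_n(L_n^{-1}(x))(g-b)(L_n^{-1}(x))$, $x\in I_n$; $0$ is the null function. $(f_m)$ is Bessel if there is $B>0$ with $\sum_m|\langle g,f_m\rangle|^2\le B\|g\|_2^2$ for all $g$. *)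

theory Defs
  imports "HOL-Analysis.Analysis"
begin

text \<open>Affine maps L_n y = a n * y + c n.  Real-valued L^2(I) is modelled by
  square-integrable functions real => real on I; equality in L^2 is a.e. equality.\<close>

definition Ipart :: "(nat \<Rightarrow> real) \<Rightarrow> nat \<Rightarrow> real set" where
  "Ipart xs n = (if n = 1 then {xs 0 .. xs 1} else {xs (n - 1) <.. xs n})"

definition L2 :: "real set \<Rightarrow> (real \<Rightarrow> real) \<Rightarrow> bool" where
  "L2 S g \<longleftrightarrow> g \<in> borel_measurable (lebesgue_on S) \<and> integrable (lebesgue_on S) (\<lambda>x. (g x)\<^sup>2)"

definition L2inner :: "real set \<Rightarrow> (real \<Rightarrow> real) \<Rightarrow> (real \<Rightarrow> real) \<Rightarrow> real" where
  "L2inner S g h = (LINT x|lebesgue_on S. g x * h x)"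

definition Bessel :: "real set \<Rightarrow> (nat \<Rightarrow> real \<Rightarrow> real) \<Rightarrow> bool" where
  "Bessel S fs \<longleftrightarrow> (\<exists>B>0. \<forall>g. L2 S g \<longrightarrow>
      summable (\<lambda>m. (L2inner S g (fs m))\<^sup>2) \<and>
      (\<Sum>m. (L2inner S g (fs m))\<^sup>2) \<le> B * L2inner S g g)"

definition Top :: "nat \<Rightarrow> (nat \<Rightarrow> real) \<Rightarrow> (nat \<Rightarrow> real) \<Rightarrow> (nat \<Rightarrow> real) \<Rightarrow>
    (nat \<Rightarrow> real \<Rightarrow> real) \<Rightarrow> (real \<Rightarrow> real) \<Rightarrow> (real \<Rightarrow> real) \<Rightarrow> (real \<Rightarrow> real) \<Rightarrow> real \<Rightarrow> real" where
  "Top N xs a c \<alpha> f b g y = f y + (\<Sum>n\<in>{1..N}. indicator (Ipart xs n) y *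
      (\<alpha> n ((y - c n) / a n) * (g ((y - c n) / a n) - b ((y - c n) / a n))))"

text \<open>f *_T b: the (a.e.-unique) fixed point of T in L^2(I).\<close>
definition fractal :: "nat \<Rightarrow> (nat \<Rightarrow> real) \<Rightarrow> (nat \<Rightarrow> real) \<Rightarrow> (nat \<Rightarrow> real) \<Rightarrow>
    (nat \<Rightarrow> real \<Rightarrow> real) \<Rightarrow> (real \<Rightarrow> real) \<Rightarrow> (real \<Rightarrow> real) \<Rightarrow> real \<Rightarrow> real" where
  "fractal N xs a c \<alpha> f b = (SOME g. L2 {xs 0 .. xs N} g \<and>
      (AE y in lebesgue_on {xs 0 .. xs N}. g y = Top N xs a c \<alpha> f b g y))"

end

theory Submission
  imports Defs
begin



definition sqi :: "'a measure \<Rightarrow> ('a \<Rightarrow> real) \<Rightarrow> bool" where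
  "sqi M u \<longleftrightarrow> u \<in> borel_measurable M \<and> integrable M (\<lambda>x. (u x)\<^sup>2)"

lemma L2_sqi: "L2 S u = sqi (lebesgue_on S) u" by (simp add: L2_def sqi_def)

lemma abs_mult_le_sq: "\<bar>(p::real) * q\<bar> \<le> p\<^sup>2 + q\<^sup>2"
proof -
  have "0 \<le> (\<bar>p\<bar> - \<bar>q\<bar>)\<^sup>2" by simp
  then have "2 * (\<bar>p\<bar> * \<bar>q\<bar>) \<le> \<bar>p\<bar>\<^sup>2 + \<bar>q\<bar>\<^sup>2" by (simp add: power2_eq_square algebra_simps)
  then have a: "2 * (\<bar>p\<bar> * \<bar>q\<bar>) \<le> p\<^sup>2 + q\<^sup>2" by simp
  have b: "0 \<le> \<bar>p\<bar> * \<bar>q\<bar>" by simp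
  from a b have "\<bar>p\<bar> * \<bar>q\<bar> \<le> p\<^sup>2 + q\<^sup>2" by linarith
  then show ?thesis by (simp add: abs_mult)
qed

lemma sq_add_le: "((p::real) + q)\<^sup>2 \<le> 2 * p\<^sup>2 + 2 * q\<^sup>2"
proof -
  have "0 \<le> (p - q)\<^sup>2" by simp
  then show ?thesis by (simp add: power2_eq_square algebra_simps)
qed

lemma sqi_mult: assumes "sqi M u" "sqi M v" shows "integrable M (\<lambda>x. u x * v x)"
proof -
  have [measurable]: "u \<in> borel_measurable M" "v \<in> borel_measurable M" using assms by (auto simp: sqi_def)
  have "integrable M (\<lambda>x. (u x)\<^sup>2 + (v x)\<^sup>2)" using assms by (auto simp: sqi_def)
  then show ?thesis
    by (rule Bochner_Integration.integrable_bound) (auto intro!: AE_I2 simp: abs_mult_le_sq)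
qed

lemma sqi_add: assumes "sqi M u" "sqi M v" shows "sqi M (\<lambda>x. u x + v x)"
proof -
  have [measurable]: "u \<in> borel_measurable M" "v \<in> borel_measurable M" using assms by (auto simp: sqi_def)
  have "integrable M (\<lambda>x. 2 * (u x)\<^sup>2 + 2 * (v x)\<^sup>2)" using assms by (auto simp: sqi_def)
  then have "integrable M (\<lambda>x. (u x + v x)\<^sup>2)"
    by (rule Bochner_Integration.integrable_bound) (auto intro!: AE_I2 simp: sq_add_le)
  then show ?thesis by (simp add: sqi_def)
qed

lemma sqi_cmult: assumes "sqi M u" shows "sqi M (\<lambda>x. r * u x)"
  using assms by (auto simp: sqi_def power_mult_distrib)

lemma sqi_zero: "sqi M (\<lambda>x. 0)" by (simp add: sqi_def)

lemma sqi_abs: assumes "sqi M u" shows "sqi M (\<lambda>x. \<bar>u x\<bar>)"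
  using assms by (auto simp: sqi_def)

lemma sqi_sum: assumes "finite A" "\<And>i. i \<in> A \<Longrightarrow> sqi M (f i)" shows "sqi M (\<lambda>x. \<Sum>i\<in>A. f i x)"
  using assms by (induction A rule: finite_induct) (auto intro: sqi_add simp: sqi_zero)

lemma sqi_CS: assumes "sqi M u" "sqi M v"
  shows "(LINT x|M. u x * v x)\<^sup>2 \<le> (LINT x|M. (u x)\<^sup>2) * (LINT x|M. (v x)\<^sup>2)"
proof -
  define A where "A = (LINT x|M. (u x)\<^sup>2)"
  define B where "B = (LINT x|M. (v x)\<^sup>2)"
  define C where "C = (LINT x|M. u x * v x)"
  have iu: "integrable M (\<lambda>x. (u x)\<^sup>2)" and iv: "integrable M (\<lambda>x. (v x)\<^sup>2)" using assms by (auto simp: sqi_def)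
  have iuv: "integrable M (\<lambda>x. u x * v x)" using sqi_mult assms by blast
  have key: "0 \<le> A - 2*t*C + t\<^sup>2*B" for t
  proof -
    have "0 \<le> (LINT x|M. (u x - t * v x)\<^sup>2)" by simp
    also have "(\<lambda>x. (u x - t * v x)\<^sup>2) = (\<lambda>x. ((u x)\<^sup>2 + t\<^sup>2 * (v x)\<^sup>2) - 2*t*(u x * v x))"
      by (auto simp: power2_eq_square algebra_simps)
    also have "(LINT x|M. ((u x)\<^sup>2 + t\<^sup>2 * (v x)\<^sup>2) - 2*t*(u x * v x)) = A - 2*t*C + t\<^sup>2*B"
      using iu iv iuv by (simp add: A_def B_def C_def)
    finally show ?thesis .
  qed
  have B0: "B \<ge> 0" unfolding B_def by simp
  show ?thesis
  proof (cases "B = 0")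
    case True
    have "C = 0"
    proof (rule ccontr)
      assume "C \<noteq> 0"
      have "0 \<le> A - 2*((A+1)/(2*C))*C" using key[of "(A+1)/(2*C)"] True by simp
      also have "\<dots> = -1" using \<open>C \<noteq> 0\<close> by (simp add: field_simps)
      finally show False by simp
    qed
    then show ?thesis using True by (simp add: A_def B_def C_def)
  next
    case False
    then have Bp: "B > 0" using B0 by simp
    have "0 \<le> A - 2*(C/B)*C + (C/B)\<^sup>2*B" by (rule key)
    also have "\<dots> = A - C\<^sup>2/B" using Bp by (simp add: field_simps power2_eq_square)
    finally have "C\<^sup>2/B \<le> A" by simp
    then have "C\<^sup>2 \<le> A * B" using Bp by (simp add: field_simps)
    then show ?thesis by (simp add: A_def B_def C_def)
  qed
qed

lemma sqi_CS2: assumes "sqi M u" "sqi M v"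
  shows "(LINT x|M. u x * v x) \<le> sqrt (LINT x|M. (u x)\<^sup>2) * sqrt (LINT x|M. (v x)\<^sup>2)"
proof -
  have "(LINT x|M. u x * v x) \<le> sqrt ((LINT x|M. u x * v x)\<^sup>2)" by simp
  also have "\<dots> \<le> sqrt ((LINT x|M. (u x)\<^sup>2) * (LINT x|M. (v x)\<^sup>2))"
    using sqi_CS[OF assms] real_sqrt_le_mono by blast
  finally show ?thesis by (simp add: real_sqrt_mult)
qed




lemma sq_le_of_sqrt: assumes "0 \<le> S" "0 \<le> H" "0 \<le> X" "S \<le> sqrt H * sqrt X" shows "S\<^sup>2 \<le> H * X"
proof -
  have "S\<^sup>2 \<le> (sqrt H * sqrt X)\<^sup>2" using assms by (intro power_mono) auto
  also have "\<dots> = H * X" using assms by (simp add: power_mult_distrib)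
  finally show ?thesis .
qed

lemma arith1: assumes "0 \<le> P" "0 \<le> S" "0 \<le> B" "P \<le> sqrt S * sqrt (B*P)" shows "P \<le> S*B"
proof (cases "P = 0")
  case True then show ?thesis using assms by simp
next
  case False
  have "P\<^sup>2 \<le> S * (B*P)" using sq_le_of_sqrt assms by auto
  then have "P * P \<le> (S*B) * P" by (simp add: power2_eq_square algebra_simps)
  then show ?thesis using False assms(1) by (simp add: mult_le_cancel_right)
qed

lemma bessel_transfer:
  fixes M :: "'a measure" and fs gs :: "nat \<Rightarrow> 'a \<Rightarrow> real"
  assumes sf: "\<And>m. sqi M (fs m)" and sg: "\<And>m. sqi M (gs m)"
    and B: "B > 0" "\<And>h. sqi M h \<Longrightarrow> summable (\<lambda>m. (LINT x|M. h x * fs m x)\<^sup>2) \<and>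
          (\<Sum>m. (LINT x|M. h x * fs m x)\<^sup>2) \<le> B * (LINT x|M. h x * h x)"
    and D: "\<And>K c. (LINT x|M. (\<Sum>m<K. c m * gs m x)\<^sup>2) \<le> D\<^sup>2 * (LINT x|M. (\<Sum>m<K. c m * fs m x)\<^sup>2)"
    and h: "sqi M h"
  shows "summable (\<lambda>m. (LINT x|M. h x * gs m x)\<^sup>2) \<and>
         (\<Sum>m. (LINT x|M. h x * gs m x)\<^sup>2) \<le> (B * D\<^sup>2) * (LINT x|M. h x * h x)"
proof -
  define c where "c m = (LINT x|M. h x * gs m x)" for m
  define H where "H = (LINT x|M. h x * h x)"
  have H0: "0 \<le> H" unfolding H_def by simp
  have Hsq: "H = (LINT x|M. (h x)\<^sup>2)" unfolding H_def by (simp add: power2_eq_square)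
  have bound: "(\<Sum>m<K. (c m)\<^sup>2) \<le> B * D\<^sup>2 * H" for K
  proof -
    define S where "S = (\<Sum>m<K. (c m)\<^sup>2)"
    define u where "u x = (\<Sum>m<K. c m * gs m x)" for x
    define F where "F x = (\<Sum>m<K. c m * fs m x)" for x
    define e where "e m = (LINT x|M. F x * fs m x)" for m
    have su: "sqi M u" unfolding u_def by (intro sqi_sum sqi_cmult sg) auto
    have sF: "sqi M F" unfolding F_def by (intro sqi_sum sqi_cmult sf) auto
    have S0: "0 \<le> S" unfolding S_def by (simp add: sum_nonneg)
    define U where "U = (LINT x|M. (u x)\<^sup>2)"
    define P where "P = (LINT x|M. (F x)\<^sup>2)"
    have P0: "0 \<le> P" unfolding P_def by simp
    have U0: "0 \<le> U" unfolding U_def by simp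
    have "S = (\<Sum>m<K. c m * (LINT x|M. h x * gs m x))" unfolding S_def c_def by (simp add: power2_eq_square)
    also have "\<dots> = (LINT x|M. (\<Sum>m<K. c m * (h x * gs m x)))"
      by (subst Bochner_Integration.integral_sum) (auto intro!: integrable_mult_right sqi_mult h sg)
    also have "\<dots> = (LINT x|M. h x * u x)" unfolding u_def
      by (simp add: sum_distrib_left algebra_simps)
    also have "\<dots> \<le> sqrt H * sqrt U" unfolding Hsq U_def using sqi_CS2[OF h su] .
    finally have S1: "S \<le> sqrt H * sqrt U" .
    have "P = (LINT x|M. F x * F x)" unfolding P_def by (simp add: power2_eq_square)
    also have "\<dots> = (LINT x|M. (\<Sum>m<K. c m * (F x * fs m x)))"
      unfolding F_def[of x for x] by (simp add: sum_distrib_left algebra_simps)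
    also have "\<dots> = (\<Sum>m<K. c m * e m)" unfolding e_def
      by (subst Bochner_Integration.integral_sum) (auto intro!: integrable_mult_right sqi_mult sF sf)
    also have "\<dots> \<le> sqrt S * sqrt (\<Sum>m<K. (e m)\<^sup>2)"
    proof -
      have "(\<Sum>m<K. c m * e m) \<le> sqrt ((\<Sum>m<K. c m * e m)\<^sup>2)" by simp
      also have "\<dots> \<le> sqrt ((\<Sum>m<K. (c m)\<^sup>2) * (\<Sum>m<K. (e m)\<^sup>2))"
        using Cauchy_Schwarz_ineq_sum real_sqrt_le_mono by blast
      finally show ?thesis by (simp add: S_def real_sqrt_mult)
    qed
    also have "\<dots> \<le> sqrt S * sqrt (B * P)"
    proof -
      have bs: "summable (\<lambda>m. (e m)\<^sup>2)" and bl: "(\<Sum>m. (e m)\<^sup>2) \<le> B * (LINT x|M. F x * F x)"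
        using B(2)[OF sF] unfolding e_def by auto
      have "(\<Sum>m<K. (e m)\<^sup>2) \<le> (\<Sum>m. (e m)\<^sup>2)" by (rule sum_le_suminf[OF bs]) auto
      also have "\<dots> \<le> B * P" using bl unfolding P_def by (simp add: power2_eq_square)
      finally show ?thesis using S0 by (intro mult_left_mono real_sqrt_le_mono) auto
    qed
    finally have "P \<le> S * B" by (rule arith1[OF P0 S0 less_imp_le[OF B(1)]])
    have "U \<le> D\<^sup>2 * P" unfolding U_def P_def u_def F_def by (rule D)
    also have "\<dots> \<le> D\<^sup>2 * (S * B)" using \<open>P \<le> S * B\<close> by (intro mult_left_mono) auto
    finally have "U \<le> D\<^sup>2 * (S * B)" .
    then have "S \<le> sqrt H * sqrt (D\<^sup>2 * (S * B))" using S1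
      by (meson H0 mult_left_mono real_sqrt_ge_zero real_sqrt_le_mono order_trans)
    then have "S\<^sup>2 \<le> H * (D\<^sup>2 * (S * B))" using sq_le_of_sqrt S0 H0 B(1) by auto
    moreover have "H * (D\<^sup>2 * (S * B)) = (B * D\<^sup>2 * H) * S" by (simp add: algebra_simps)
    ultimately have SS: "S * S \<le> (B * D\<^sup>2 * H) * S" by (metis power2_eq_square)
    have "S \<le> B * D\<^sup>2 * H"
    proof (cases "S = 0")
      case True then show ?thesis using H0 B(1) by simp
    next
      case False then have "0 < S" using S0 by simp
      then show ?thesis using SS mult_le_cancel_right_pos by blast
    qed
    then show ?thesis unfolding S_def .
  qed
  have summ: "summable (\<lambda>m. (c m)\<^sup>2)" by (rule summableI_nonneg_bounded[OF _ bound]) auto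
  moreover have "(\<Sum>m. (c m)\<^sup>2) \<le> B * D\<^sup>2 * H" by (rule suminf_le_const[OF summ bound])
  ultimately show ?thesis unfolding c_def H_def by simp
qed




lemma aff_meas: "s \<noteq> 0 \<Longrightarrow> (\<lambda>x::real. t + s * x) \<in> lebesgue \<rightarrow>\<^sub>M lebesgue"
  using lebesgue_affine_measurable[where c="\<lambda>_. s" and t=t] by simp

lemma comp_aff_meas:
  assumes "F \<in> borel_measurable lebesgue" "(s::real) \<noteq> 0"
  shows "(\<lambda>y. F ((y - t) / s)) \<in> borel_measurable lebesgue"
proof -
  have "(\<lambda>y. F ((y - t) / s)) = F \<circ> (\<lambda>y. (- t / s) + (1/s) * y)"
    using assms(2) by (auto simp: fun_eq_iff field_simps)
  then show ?thesis using measurable_comp[OF aff_meas[of "1/s" "-t/s"] assms(1)] assms(2) by simp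
qed

lemma ext_meas:
  assumes "u \<in> borel_measurable (lebesgue_on S)" "S \<in> sets lebesgue"
  shows "(\<lambda>x. indicator S x * (u x::real)) \<in> borel_measurable lebesgue"
  using assms borel_measurable_restrict_space_iff[of S lebesgue u] by simp

lemma telesc: fixes K :: nat shows "(\<Sum>n\<in>{1..K}. (f n - f (n - 1) :: real)) = f K - f 0"
  by (induction K) (auto simp: atLeastAtMostSuc_conv)

locale fsetup =
  fixes N :: nat and xs a c :: "nat \<Rightarrow> real" and \<alpha> :: "nat \<Rightarrow> real \<Rightarrow> real" and \<Lambda> :: real
  assumes N2: "N \<ge> 2" and mono: "strict_mono_on {0..N} xs"
    and aff: "\<forall>n\<in>{1..N}. a n * xs 0 + c n = xs (n - 1) \<and> a n * xs N + c n = xs n"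
    and ameas: "\<forall>n\<in>{1..N}. \<alpha> n \<in> borel_measurable (lebesgue_on {xs 0 .. xs N})"
    and Lpos: "0 < \<Lambda>" and L1: "\<Lambda> < 1"
    and bnd: "AE y in lebesgue_on {xs 0 .. xs N}. \<forall>n\<in>{1..N}. \<bar>\<alpha> n y\<bar> \<le> \<Lambda>"
begin

abbreviation II where "II \<equiv> {xs 0 .. xs N}"

definition Li :: "nat \<Rightarrow> real \<Rightarrow> real" where "Li n y = (y - c n) / a n"

definition Aop :: "(real \<Rightarrow> real) \<Rightarrow> real \<Rightarrow> real" where
  "Aop u y = (\<Sum>n\<in>{1..N}. indicator (Ipart xs n) y * (\<alpha> n (Li n y) * u (Li n y)))"

lemma xs_less: "i < j \<Longrightarrow> j \<le> N \<Longrightarrow> xs i < xs j"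
  using mono by (auto simp: strict_mono_on_def)

lemma xs_le: "i \<le> j \<Longrightarrow> j \<le> N \<Longrightarrow> xs i \<le> xs j"
  using xs_less by (cases "i = j") (auto simp: less_imp_le)

lemma apos: "n \<in> {1..N} \<Longrightarrow> a n > 0"
proof -
  assume n: "n \<in> {1..N}"
  have e1: "a n * xs 0 + c n = xs (n - 1)" and e2: "a n * xs N + c n = xs n" using aff n by auto
  then have "a n * xs N - a n * xs 0 = xs n - xs (n - 1)" by linarith
  then have "a n * (xs N - xs 0) = xs n - xs (n - 1)" by (simp add: right_diff_distrib)
  moreover have "xs n - xs (n - 1) > 0" using xs_less[of "n - 1" n] n by auto
  moreover have "xs N - xs 0 > 0" using xs_less[of 0 N] N2 by auto
  ultimately show "a n > 0" by (metis zero_less_mult_pos2)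
qed

lemma a_eq: "n \<in> {1..N} \<Longrightarrow> a n = (xs n - xs (n - 1)) / (xs N - xs 0)"
proof -
  assume n: "n \<in> {1..N}"
  have e1: "a n * xs 0 + c n = xs (n - 1)" and e2: "a n * xs N + c n = xs n" using aff n by auto
  then have "a n * xs N - a n * xs 0 = xs n - xs (n - 1)" by linarith
  then have "a n * (xs N - xs 0) = xs n - xs (n - 1)" by (simp add: right_diff_distrib)
  moreover have "xs N - xs 0 > 0" using xs_less[of 0 N] N2 by auto
  ultimately show ?thesis by (simp add: field_simps)
qed

lemma sum_a: "(\<Sum>n\<in>{1..N}. a n) = 1"
proof -
  have "(\<Sum>n\<in>{1..N}. a n) = (\<Sum>n\<in>{1..N}. (xs n - xs (n - 1)) / (xs N - xs 0))"
    by (rule sum.cong) (auto simp: a_eq)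
  also have "\<dots> = (\<Sum>n\<in>{1..N}. (xs n - xs (n - 1))) / (xs N - xs 0)"
    by (simp add: sum_divide_distrib)
  also have "(\<Sum>n\<in>{1..N}. (xs n - xs (n - 1))) = xs N - xs 0" by (rule telesc)
  then have "(\<Sum>n\<in>{1..N}. (xs n - xs (n - 1))) / (xs N - xs 0) = 1" using xs_less[of 0 N] N2 by simp
  finally show ?thesis .
qed

lemma Ipart_sub: "n \<in> {1..N} \<Longrightarrow> Ipart xs n \<subseteq> {xs (n - 1) .. xs n}"
  by (auto simp: Ipart_def)

lemma Li_in: assumes n: "n \<in> {1..N}" and y: "y \<in> Ipart xs n" shows "Li n y \<in> II"
proof -
  have a: "a n > 0" using apos n .
  have y1: "xs (n - 1) \<le> y" "y \<le> xs n" using Ipart_sub[OF n] y by auto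
  have e1: "a n * xs 0 + c n = xs (n - 1)" and e2: "a n * xs N + c n = xs n" using aff n by auto
  have "xs 0 \<le> (y - c n) / a n" using a y1 e1 by (simp add: pos_le_divide_eq algebra_simps)
  moreover have "(y - c n) / a n \<le> xs N" using a y1 e2 by (simp add: pos_divide_le_eq algebra_simps)
  ultimately show ?thesis by (simp add: Li_def)
qed

lemma Ipart_disj: assumes "n \<in> {1..N}" "m \<in> {1..N}" "n \<noteq> m" "y \<in> Ipart xs n" shows "y \<notin> Ipart xs m"
proof
  assume ym: "y \<in> Ipart xs m"
  { fix p q assume p: "p \<in> {1..N}" and q: "q \<in> {1..N}" and pq: "p < q" and yp: "y \<in> Ipart xs p" and yq: "y \<in> Ipart xs q"
    have "y \<le> xs p" using Ipart_sub[OF p] yp by auto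
    also have "xs p \<le> xs (q - 1)" using xs_le[of p "q - 1"] pq q by auto
    also have "xs (q - 1) < y" using yq pq p by (auto simp: Ipart_def split: if_splits)
    finally have False by simp }
  then show False using assms ym by (cases "n < m") (auto simp: not_less_iff_gr_or_eq)
qed

lemma Ipart_sets: "Ipart xs n \<in> sets lebesgue"
  by (auto simp: Ipart_def)

lemma Aop_single: assumes n: "n \<in> {1..N}" and y: "y \<in> Ipart xs n"
  shows "Aop u y = \<alpha> n (Li n y) * u (Li n y)"
proof -
  have "Aop u y = (\<Sum>m\<in>{1..N}. if m = n then \<alpha> n (Li n y) * u (Li n y) else 0)"
    unfolding Aop_def
  proof (rule sum.cong[OF refl])
    fix m assume m: "m \<in> {1..N}"
    show "indicator (Ipart xs m) y * (\<alpha> m (Li m y) * u (Li m y)) = (if m = n then \<alpha> n (Li n y) * u (Li n y) else 0)"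
    proof (cases "m = n")
      case True then show ?thesis using y by simp
    next
      case False then have "y \<notin> Ipart xs m" using Ipart_disj[OF n m] y by auto
      then show ?thesis using False by simp
    qed
  qed
  also have "\<dots> = \<alpha> n (Li n y) * u (Li n y)" using n by simp
  finally show ?thesis .
qed

lemma Aop_none: "(\<forall>n\<in>{1..N}. y \<notin> Ipart xs n) \<Longrightarrow> Aop u y = 0"
  unfolding Aop_def by (intro sum.neutral) auto

definition ext :: "(real \<Rightarrow> real) \<Rightarrow> real \<Rightarrow> real" where "ext u x = indicator II x * u x"

lemma ext_in: "x \<in> II \<Longrightarrow> ext u x = u x" by (simp add: ext_def)

lemma Aop_ext: "Aop u y = (\<Sum>n\<in>{1..N}. indicator (Ipart xs n) y * (ext (\<alpha> n) (Li n y) * ext u (Li n y)))"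
  unfolding Aop_def
proof (rule sum.cong[OF refl])
  fix n assume n: "n \<in> {1..N}"
  show "indicator (Ipart xs n) y * (\<alpha> n (Li n y) * u (Li n y)) = indicator (Ipart xs n) y * (ext (\<alpha> n) (Li n y) * ext u (Li n y))"
  proof (cases "y \<in> Ipart xs n")
    case True then show ?thesis using ext_in[OF Li_in[OF n True]] by simp
  qed simp
qed

lemma ext_meas': "u \<in> borel_measurable (lebesgue_on II) \<Longrightarrow> ext u \<in> borel_measurable lebesgue"
  unfolding ext_def[abs_def] by (rule ext_meas) auto

lemma Li_meas: "F \<in> borel_measurable lebesgue \<Longrightarrow> n \<in> {1..N} \<Longrightarrow> (\<lambda>y. F (Li n y)) \<in> borel_measurable lebesgue"
proof -
  assume F: "F \<in> borel_measurable lebesgue" and n: "n \<in> {1..N}"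
  have "a n \<noteq> 0" using apos[OF n] by simp
  then show ?thesis unfolding Li_def using F by (intro comp_aff_meas) auto
qed

lemma Aop_meas_leb: assumes "u \<in> borel_measurable (lebesgue_on II)" shows "Aop u \<in> borel_measurable lebesgue"
proof -
  have "(\<lambda>y. \<Sum>n\<in>{1..N}. indicator (Ipart xs n) y * (ext (\<alpha> n) (Li n y) * ext u (Li n y))) \<in> borel_measurable lebesgue"
  proof (intro borel_measurable_sum borel_measurable_times)
    fix n assume n: "n \<in> {1..N}"
    show "(\<lambda>y. indicator (Ipart xs n) y :: real) \<in> borel_measurable lebesgue"
      using Ipart_sets by (intro borel_measurable_indicator) auto
    show "(\<lambda>y. ext (\<alpha> n) (Li n y)) \<in> borel_measurable lebesgue"
      using ameas n by (intro Li_meas ext_meas') auto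
    show "(\<lambda>y. ext u (Li n y)) \<in> borel_measurable lebesgue"
      using assms n by (intro Li_meas ext_meas') auto
  qed
  then show ?thesis by (simp add: Aop_ext[abs_def])
qed

lemma Aop_meas: "u \<in> borel_measurable (lebesgue_on II) \<Longrightarrow> Aop u \<in> borel_measurable (lebesgue_on II)"
  by (rule measurable_restrict_space1) (rule Aop_meas_leb)

end



context fsetup begin

lemma ext_sq_le: "(ext (\<alpha> n) x)\<^sup>2 \<le> \<Lambda>\<^sup>2" if "x \<in> II \<longrightarrow> \<bar>\<alpha> n x\<bar> \<le> \<Lambda>"
proof (cases "x \<in> II")
  case True then have "\<bar>\<alpha> n x\<bar> \<le> \<Lambda>" using that by simp
  then have "\<bar>\<alpha> n x\<bar>\<^sup>2 \<le> \<Lambda>\<^sup>2" by (intro power_mono) auto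
  then show ?thesis using True by (simp add: ext_in)
next
  case False then show ?thesis by (simp add: ext_def)
qed

lemma Aop_nn:
  assumes u: "u \<in> borel_measurable (lebesgue_on II)"
  shows "(\<integral>\<^sup>+y. ennreal ((Aop u y)\<^sup>2) \<partial>lebesgue_on II) \<le> ennreal (\<Lambda>\<^sup>2) * (\<integral>\<^sup>+x. ennreal ((u x)\<^sup>2) \<partial>lebesgue_on II)"
proof -
  define G where "G n x = (ext (\<alpha> n) x * ext u x)\<^sup>2" for n x
  have Gm: "G n \<in> borel_measurable lebesgue" if n: "n\<in>{1..N}" for n
    unfolding G_def[abs_def] using ext_meas'[OF u] ext_meas' ameas n
    by (intro borel_measurable_power borel_measurable_times) auto
  have GLm: "(\<lambda>y. ennreal (G n (Li n y))) \<in> borel_measurable lebesgue" if n: "n\<in>{1..N}" for n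
    using measurable_compose[OF Li_meas[OF Gm[OF n] n] measurable_ennreal] .
  have "(\<integral>\<^sup>+y. ennreal ((Aop u y)\<^sup>2) \<partial>lebesgue_on II) = (\<integral>\<^sup>+y. ennreal ((Aop u y)\<^sup>2) * indicator II y \<partial>lebesgue)"
    by (rule nn_integral_restrict_space) auto
  also have "\<dots> \<le> (\<integral>\<^sup>+y. (\<Sum>n\<in>{1..N}. ennreal (G n (Li n y))) \<partial>lebesgue)"
  proof (rule nn_integral_mono)
    fix y
    show "ennreal ((Aop u y)\<^sup>2) * indicator II y \<le> (\<Sum>n\<in>{1..N}. ennreal (G n (Li n y)))"
    proof (cases "\<exists>n\<in>{1..N}. y \<in> Ipart xs n")
      case True
      then obtain n where n: "n\<in>{1..N}" and y: "y \<in> Ipart xs n" by blast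
      have "Aop u y = \<alpha> n (Li n y) * u (Li n y)" by (rule Aop_single[OF n y])
      also have "\<dots> = ext (\<alpha> n) (Li n y) * ext u (Li n y)" using Li_in[OF n y] by (simp add: ext_in)
      finally have "(Aop u y)\<^sup>2 = G n (Li n y)" by (simp add: G_def)
      then have "ennreal ((Aop u y)\<^sup>2) * indicator II y \<le> ennreal (G n (Li n y))" by (simp add: indicator_def)
      also have "\<dots> \<le> (\<Sum>n\<in>{1..N}. ennreal (G n (Li n y)))" using n by (intro member_le_sum) auto
      finally show ?thesis .
    next
      case False then have "Aop u y = 0" by (intro Aop_none) auto
      then show ?thesis by simp
    qed
  qed
  also have "\<dots> = (\<Sum>n\<in>{1..N}. \<integral>\<^sup>+y. ennreal (G n (Li n y)) \<partial>lebesgue)"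
    by (rule nn_integral_sum) (auto intro: GLm)
  also have "\<dots> \<le> (\<Sum>n\<in>{1..N}. ennreal (a n) * (ennreal (\<Lambda>\<^sup>2) * (\<integral>\<^sup>+x. ennreal ((u x)\<^sup>2) \<partial>lebesgue_on II)))"
  proof (rule sum_mono)
    fix n assume n: "n \<in> {1..N}"
    have an: "a n \<noteq> 0" "a n > 0" using apos[OF n] by auto
    have "(\<integral>\<^sup>+y. ennreal (G n (Li n y)) \<partial>lebesgue) = ennreal \<bar>a n\<bar> * (\<integral>\<^sup>+x. ennreal (G n (Li n (c n + a n * x))) \<partial>lebesgue)"
      by (rule nn_integral_real_affine_lebesgue[OF GLm[OF n] an(1)])
    also have "(\<lambda>x. ennreal (G n (Li n (c n + a n * x)))) = (\<lambda>x. ennreal (G n x))"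
      using an by (simp add: Li_def)
    also have "\<bar>a n\<bar> = a n" using an by simp
    finally have eq: "(\<integral>\<^sup>+y. ennreal (G n (Li n y)) \<partial>lebesgue) = ennreal (a n) * (\<integral>\<^sup>+x. ennreal (G n x) \<partial>lebesgue)" .
    have ae: "AE x in lebesgue. x \<in> II \<longrightarrow> \<bar>\<alpha> n x\<bar> \<le> \<Lambda>"
    proof -
      have "AE x in lebesgue. x \<in> II \<longrightarrow> (\<forall>n\<in>{1..N}. \<bar>\<alpha> n x\<bar> \<le> \<Lambda>)"
        using bnd AE_restrict_space_iff[of II lebesgue] by simp
      then show ?thesis by (rule eventually_mono) (use n in auto)
    qed
    have "(\<integral>\<^sup>+x. ennreal (G n x) \<partial>lebesgue) \<le> (\<integral>\<^sup>+x. ennreal (\<Lambda>\<^sup>2) * ennreal ((ext u x)\<^sup>2) \<partial>lebesgue)"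
    proof (rule nn_integral_mono_AE)
      show "AE x in lebesgue. ennreal (G n x) \<le> ennreal (\<Lambda>\<^sup>2) * ennreal ((ext u x)\<^sup>2)"
      proof (rule eventually_mono[OF ae])
        fix x assume "x \<in> II \<longrightarrow> \<bar>\<alpha> n x\<bar> \<le> \<Lambda>"
        then have "(ext (\<alpha> n) x)\<^sup>2 \<le> \<Lambda>\<^sup>2" by (rule ext_sq_le)
        then have "G n x \<le> \<Lambda>\<^sup>2 * (ext u x)\<^sup>2" unfolding G_def power_mult_distrib
          by (intro mult_right_mono) auto
        then show "ennreal (G n x) \<le> ennreal (\<Lambda>\<^sup>2) * ennreal ((ext u x)\<^sup>2)"
          by (simp add: ennreal_mult[symmetric] ennreal_leI)
      qed
    qed
    also have "\<dots> = ennreal (\<Lambda>\<^sup>2) * (\<integral>\<^sup>+x. ennreal ((ext u x)\<^sup>2) \<partial>lebesgue)"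
      using ext_meas'[OF u] by (intro nn_integral_cmult) auto
    also have "(\<integral>\<^sup>+x. ennreal ((ext u x)\<^sup>2) \<partial>lebesgue) = (\<integral>\<^sup>+x. ennreal ((u x)\<^sup>2) \<partial>lebesgue_on II)"
      by (subst nn_integral_restrict_space) (auto simp: ext_def indicator_def intro!: nn_integral_cong)
    finally show "(\<integral>\<^sup>+y. ennreal (G n (Li n y)) \<partial>lebesgue) \<le> ennreal (a n) * (ennreal (\<Lambda>\<^sup>2) * (\<integral>\<^sup>+x. ennreal ((u x)\<^sup>2) \<partial>lebesgue_on II))"
      unfolding eq by (intro mult_left_mono) auto
  qed
  also have "\<dots> = (\<Sum>n\<in>{1..N}. ennreal (a n)) * (ennreal (\<Lambda>\<^sup>2) * (\<integral>\<^sup>+x. ennreal ((u x)\<^sup>2) \<partial>lebesgue_on II))"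
    by (simp add: sum_distrib_right)
  also have "(\<Sum>n\<in>{1..N}. ennreal (a n)) = 1"
    using apos sum_a by (subst sum_ennreal) (auto simp: less_imp_le)
  finally show ?thesis by simp
qed

end



lemma sqi_nn: assumes "u \<in> borel_measurable M"
  shows "sqi M u \<longleftrightarrow> (\<integral>\<^sup>+x. ennreal ((u x)\<^sup>2) \<partial>M) < \<infinity>"
  using assms by (simp add: sqi_def integrable_iff_bounded)

lemma sqi_int_eq: assumes "sqi M u"
  shows "(\<integral>\<^sup>+x. ennreal ((u x)\<^sup>2) \<partial>M) = ennreal (LINT x|M. (u x)\<^sup>2)"
  using assms by (intro nn_integral_eq_integral) (auto simp: sqi_def)

context fsetup begin

abbreviation MI where "MI \<equiv> lebesgue_on II"

lemma Aop_sqi: assumes u: "sqi MI u"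
  shows "sqi MI (Aop u) \<and> (LINT y|MI. (Aop u y)\<^sup>2) \<le> \<Lambda>\<^sup>2 * (LINT x|MI. (u x)\<^sup>2)"
proof -
  have um: "u \<in> borel_measurable MI" using u by (simp add: sqi_def)
  have Am: "Aop u \<in> borel_measurable MI" by (rule Aop_meas[OF um])
  have "(\<integral>\<^sup>+y. ennreal ((Aop u y)\<^sup>2) \<partial>MI) \<le> ennreal (\<Lambda>\<^sup>2) * ennreal (LINT x|MI. (u x)\<^sup>2)"
    using Aop_nn[OF um] sqi_int_eq[OF u] by simp
  also have "\<dots> = ennreal (\<Lambda>\<^sup>2 * (LINT x|MI. (u x)\<^sup>2))" by (simp add: ennreal_mult)
  finally have le: "(\<integral>\<^sup>+y. ennreal ((Aop u y)\<^sup>2) \<partial>MI) \<le> ennreal (\<Lambda>\<^sup>2 * (LINT x|MI. (u x)\<^sup>2))" .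
  then have sA: "sqi MI (Aop u)" using Am by (subst sqi_nn) (auto simp: le_less_trans)
  have "ennreal (LINT y|MI. (Aop u y)\<^sup>2) \<le> ennreal (\<Lambda>\<^sup>2 * (LINT x|MI. (u x)\<^sup>2))"
    using le sqi_int_eq[OF sA] by simp
  then have "(LINT y|MI. (Aop u y)\<^sup>2) \<le> \<Lambda>\<^sup>2 * (LINT x|MI. (u x)\<^sup>2)"
    by (subst (asm) ennreal_le_iff) auto
  with sA show ?thesis by simp
qed

lemma fixed_bound:
  assumes u: "sqi MI u" and F: "sqi MI F" and fp: "AE y in MI. u y = F y + Aop u y"
  shows "(LINT x|MI. (u x)\<^sup>2) \<le> (1/(1-\<Lambda>))\<^sup>2 * (LINT x|MI. (F x)\<^sup>2)"
proof -
  define U where "U = (LINT x|MI. (u x)\<^sup>2)"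
  define P where "P = (LINT x|MI. (F x)\<^sup>2)"
  define W where "W = (LINT x|MI. (Aop u x)\<^sup>2)"
  have sA: "sqi MI (Aop u)" and W: "W \<le> \<Lambda>\<^sup>2 * U" using Aop_sqi[OF u] by (auto simp: W_def U_def)
  have U0: "0 \<le> U" "0 \<le> P" "0 \<le> W" by (auto simp: U_def P_def W_def)
  have [measurable]: "u \<in> borel_measurable MI" "F \<in> borel_measurable MI" "Aop u \<in> borel_measurable MI"
    using u F sA by (auto simp: sqi_def)
  have "U = (LINT x|MI. u x * u x)" by (simp add: U_def power2_eq_square)
  also have "\<dots> = (LINT x|MI. u x * F x + u x * Aop u x)"
    by (rule integral_cong_AE) (auto intro!: eventually_mono[OF fp] simp: algebra_simps)
  also have "\<dots> = (LINT x|MI. u x * F x) + (LINT x|MI. u x * Aop u x)"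
    by (rule Bochner_Integration.integral_add) (auto intro!: sqi_mult u F sA)
  also have "\<dots> \<le> sqrt U * sqrt P + sqrt U * sqrt W"
    using sqi_CS2[OF u F] sqi_CS2[OF u sA] by (auto simp: U_def P_def W_def intro: add_mono)
  finally have c1: "U \<le> sqrt U * sqrt P + sqrt U * sqrt W" .
  have c2: "sqrt W \<le> \<Lambda> * sqrt U"
  proof -
    have "sqrt W \<le> sqrt (\<Lambda>\<^sup>2 * U)" using W by (rule real_sqrt_le_mono)
    also have "\<dots> = \<Lambda> * sqrt U" using Lpos by (simp add: real_sqrt_mult)
    finally show ?thesis .
  qed
  have "sqrt U * sqrt W \<le> sqrt U * (\<Lambda> * sqrt U)" using c2 U0 by (intro mult_left_mono) auto
  then have key: "U \<le> sqrt U * sqrt P + sqrt U * (\<Lambda> * sqrt U)" using c1 by linarith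
  define s where "s = sqrt U"
  have s0: "0 \<le> s" using U0 by (simp add: s_def)
  have Us: "U = s * s" using U0(1) by (metis abs_of_nonneg real_sqrt_mult_self s_def)
  have "s \<le> sqrt P / (1 - \<Lambda>)"
  proof (cases "s = 0")
    case True then show ?thesis using L1 U0 by simp
  next
    case False then have sp: "s > 0" using s0 by simp
    have "s * s \<le> s * sqrt P + s * (\<Lambda> * s)" using key Us by (simp add: s_def[symmetric] abs_of_nonneg[OF s0])
    then have "s * ((1 - \<Lambda>) * s) \<le> s * sqrt P" by (simp add: algebra_simps)
    then have "(1 - \<Lambda>) * s \<le> sqrt P" using sp by (simp add: mult_le_cancel_left_pos)
    then show ?thesis using L1 by (simp add: field_simps)
  qed
  then have "s * s \<le> (sqrt P / (1 - \<Lambda>)) * (sqrt P / (1 - \<Lambda>))" using s0 by (intro mult_mono) auto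
  also have "\<dots> = (1/(1-\<Lambda>))\<^sup>2 * P" using U0 by (simp add: power2_eq_square field_simps)
  finally show ?thesis using Us by (simp add: U_def P_def)
qed

lemma Aop_lin: "Aop (\<lambda>x. \<Sum>m\<in>A. r m * g m x) y = (\<Sum>m\<in>A. r m * Aop (g m) y)"
proof -
  have "Aop (\<lambda>x. \<Sum>m\<in>A. r m * g m x) y = (\<Sum>n\<in>{1..N}. \<Sum>m\<in>A. r m * (indicator (Ipart xs n) y * (\<alpha> n (Li n y) * g m (Li n y))))"
    unfolding Aop_def by (intro sum.cong refl) (simp only: sum_distrib_left mult_ac)
  also have "\<dots> = (\<Sum>m\<in>A. \<Sum>n\<in>{1..N}. r m * (indicator (Ipart xs n) y * (\<alpha> n (Li n y) * g m (Li n y))))"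
    by (rule sum.swap)
  also have "\<dots> = (\<Sum>m\<in>A. r m * Aop (g m) y)" unfolding Aop_def by (simp only: sum_distrib_left)
  finally show ?thesis .
qed

lemma comb_bound:
  fixes g f :: "nat \<Rightarrow> real \<Rightarrow> real"
  assumes sg: "\<And>m. sqi MI (g m)" and sf: "\<And>m. sqi MI (f m)"
    and fp: "\<And>m. AE y in MI. g m y = f m y + Aop (g m) y"
  shows "(LINT x|MI. (\<Sum>m<K. r m * g m x)\<^sup>2) \<le> (1/(1-\<Lambda>))\<^sup>2 * (LINT x|MI. (\<Sum>m<K. r m * f m x)\<^sup>2)"
proof (rule fixed_bound)
  show "sqi MI (\<lambda>x. \<Sum>m<K. r m * g m x)" by (intro sqi_sum sqi_cmult sg) auto
  show "sqi MI (\<lambda>x. \<Sum>m<K. r m * f m x)" by (intro sqi_sum sqi_cmult sf) auto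
  have "AE y in MI. \<forall>m\<in>{..<K}. g m y = f m y + Aop (g m) y"
    using fp by (intro eventually_ball_finite) auto
  then show "AE y in MI. (\<Sum>m<K. r m * g m y) = (\<Sum>m<K. r m * f m y) + Aop (\<lambda>x. \<Sum>m<K. r m * g m x) y"
    by (rule eventually_mono) (simp add: Aop_lin algebra_simps sum.distrib[symmetric])
qed

end



context fsetup begin

definition vv :: "(real \<Rightarrow> real) \<Rightarrow> nat \<Rightarrow> real \<Rightarrow> real" where "vv f k = (Aop ^^ k) f"

lemma vv_0[simp]: "vv f 0 = f" by (simp add: vv_def)
lemma vv_Suc: "vv f (Suc k) = Aop (vv f k)" by (simp add: vv_def)

lemma vv_sqi: assumes f: "sqi MI f"
  shows "sqi MI (vv f k) \<and> (LINT x|MI. (vv f k x)\<^sup>2) \<le> (\<Lambda>\<^sup>2)^k * (LINT x|MI. (f x)\<^sup>2)"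
proof (induction k)
  case 0 then show ?case using f by simp
next
  case (Suc k)
  then have s: "sqi MI (vv f k)" and b: "(LINT x|MI. (vv f k x)\<^sup>2) \<le> (\<Lambda>\<^sup>2)^k * (LINT x|MI. (f x)\<^sup>2)" by auto
  have "sqi MI (vv f (Suc k))" and "(LINT x|MI. (vv f (Suc k) x)\<^sup>2) \<le> \<Lambda>\<^sup>2 * (LINT x|MI. (vv f k x)\<^sup>2)"
    using Aop_sqi[OF s] by (auto simp: vv_Suc)
  moreover have "\<Lambda>\<^sup>2 * (LINT x|MI. (vv f k x)\<^sup>2) \<le> \<Lambda>\<^sup>2 * ((\<Lambda>\<^sup>2)^k * (LINT x|MI. (f x)\<^sup>2))"
    using b by (intro mult_left_mono) auto
  ultimately show ?case by simp
qed

lemma geom_le: "(\<Sum>k<K. \<Lambda>^k) \<le> 1 / (1 - \<Lambda>)"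
proof -
  have "(\<Sum>k<K. \<Lambda>^k) = (1 - \<Lambda>^K) / (1 - \<Lambda>)" using L1 by (simp add: sum_gp_strict)
  also have "\<dots> \<le> 1 / (1 - \<Lambda>)" using L1 Lpos by (intro divide_right_mono) auto
  finally show ?thesis .
qed

lemma pw_CS: "(\<Sum>k<K. \<bar>w k\<bar>)\<^sup>2 \<le> (1/(1-\<Lambda>)) * (\<Sum>k<K. (w k)\<^sup>2 / \<Lambda>^k)"
proof -
  have "(\<Sum>k<K. \<bar>w k\<bar>) = (\<Sum>k<K. sqrt (\<Lambda>^k) * (\<bar>w k\<bar> / sqrt (\<Lambda>^k)))"
    using Lpos by (intro sum.cong refl) auto
  then have "(\<Sum>k<K. \<bar>w k\<bar>)\<^sup>2 \<le> (\<Sum>k<K. (sqrt (\<Lambda>^k))\<^sup>2) * (\<Sum>k<K. (\<bar>w k\<bar> / sqrt (\<Lambda>^k))\<^sup>2)"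
    using Cauchy_Schwarz_ineq_sum by metis
  also have "(\<Sum>k<K. (sqrt (\<Lambda>^k))\<^sup>2) = (\<Sum>k<K. \<Lambda>^k)" using Lpos by simp
  also have "(\<Sum>k<K. (\<bar>w k\<bar> / sqrt (\<Lambda>^k))\<^sup>2) = (\<Sum>k<K. (w k)\<^sup>2 / \<Lambda>^k)"
    using Lpos by (intro sum.cong refl) (simp add: power_divide)
  also have "(\<Sum>k<K. \<Lambda>^k) * (\<Sum>k<K. (w k)\<^sup>2 / \<Lambda>^k) \<le> (1/(1-\<Lambda>)) * (\<Sum>k<K. (w k)\<^sup>2 / \<Lambda>^k)"
    using geom_le Lpos by (intro mult_right_mono sum_nonneg) auto
  finally show ?thesis .
qed

lemma H_bound: assumes f: "sqi MI f"
  shows "sqi MI (\<lambda>x. \<Sum>k<K. \<bar>vv f k x\<bar>) \<and>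
    (LINT x|MI. (\<Sum>k<K. \<bar>vv f k x\<bar>)\<^sup>2) \<le> (1/(1-\<Lambda>))\<^sup>2 * (LINT x|MI. (f x)\<^sup>2)"
proof -
  define Q where "Q = (LINT x|MI. (f x)\<^sup>2)"
  have Q0: "0 \<le> Q" by (simp add: Q_def)
  have sv: "sqi MI (vv f k)" for k using vv_sqi[OF f] by auto
  have iv: "integrable MI (\<lambda>x. (vv f k x)\<^sup>2)" for k using sv by (simp add: sqi_def)
  have sH: "sqi MI (\<lambda>x. \<Sum>k<K. \<bar>vv f k x\<bar>)" by (intro sqi_sum sqi_abs sv) auto
  have "(LINT x|MI. (\<Sum>k<K. \<bar>vv f k x\<bar>)\<^sup>2) \<le> (LINT x|MI. (1/(1-\<Lambda>)) * (\<Sum>k<K. (vv f k x)\<^sup>2 / \<Lambda>^k))"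
    using sH iv by (intro Bochner_Integration.integral_mono pw_CS) (auto simp: sqi_def)
  also have "\<dots> = (1/(1-\<Lambda>)) * (\<Sum>k<K. (LINT x|MI. (vv f k x)\<^sup>2) / \<Lambda>^k)"
    using iv by (simp add: Bochner_Integration.integral_sum)
  also have "\<dots> \<le> (1/(1-\<Lambda>)) * (\<Sum>k<K. \<Lambda>^k * Q)"
  proof (intro mult_left_mono sum_mono)
    fix k
    have "(LINT x|MI. (vv f k x)\<^sup>2) / \<Lambda>^k \<le> ((\<Lambda>\<^sup>2)^k * Q) / \<Lambda>^k"
      using vv_sqi[OF f, of k] Lpos by (intro divide_right_mono) (auto simp: Q_def)
    also have "\<dots> = \<Lambda>^k * Q" using Lpos by (simp add: power_mult_distrib power2_eq_square)
    finally show "(LINT x|MI. (vv f k x)\<^sup>2) / \<Lambda>^k \<le> \<Lambda>^k * Q" .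
  qed (use L1 in auto)
  also have "(\<Sum>k<K. \<Lambda>^k * Q) \<le> (1/(1-\<Lambda>)) * Q"
    unfolding sum_distrib_right[symmetric] using geom_le[of K] Q0 by (rule mult_right_mono)
  then have "(1/(1-\<Lambda>)) * (\<Sum>k<K. \<Lambda>^k * Q) \<le> (1/(1-\<Lambda>)) * ((1/(1-\<Lambda>)) * Q)"
    using L1 by (intro mult_left_mono) auto
  finally show ?thesis using sH by (simp add: Q_def power2_eq_square mult.assoc)
qed

end



context fsetup begin

lemma AE_transfer:
  assumes n: "n \<in> {1..N}" and P: "AE x in MI. P x"
  shows "AE y in MI. y \<in> Ipart xs n \<longrightarrow> P (Li n y)"
proof -
  have "AE x in lebesgue. x \<in> II \<longrightarrow> P x" using P AE_restrict_space_iff[of II lebesgue] by simp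
  then obtain Ns where Ns: "{x \<in> space lebesgue. \<not> (x \<in> II \<longrightarrow> P x)} \<subseteq> Ns" "emeasure lebesgue Ns = 0" "Ns \<in> sets lebesgue"
    by (elim AE_E) auto
  have an: "a n > 0" using apos[OF n] .
  have img: "(\<lambda>x. a n *\<^sub>R x + c n) ` Ns = (Li n) -` Ns"
  proof
    show "(\<lambda>x. a n *\<^sub>R x + c n) ` Ns \<subseteq> Li n -` Ns" using an by (auto simp: Li_def)
    show "Li n -` Ns \<subseteq> (\<lambda>x. a n *\<^sub>R x + c n) ` Ns"
    proof
      fix y assume "y \<in> Li n -` Ns"
      then have "Li n y \<in> Ns" by simp
      moreover have "y = a n *\<^sub>R Li n y + c n" using an by (simp add: Li_def)
      ultimately show "y \<in> (\<lambda>x. a n *\<^sub>R x + c n) ` Ns" by (metis image_eqI)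
    qed
  qed
  have "Li n = (\<lambda>y. (- c n / a n) + (1 / a n) * y)" using an by (auto simp: Li_def fun_eq_iff field_simps)
  then have Lm: "Li n \<in> lebesgue \<rightarrow>\<^sub>M lebesgue" using aff_meas[of "1 / a n" "- c n / a n"] an by simp
  have ms: "Li n -` Ns \<in> sets lebesgue" using measurable_sets[OF Lm Ns(3)] by simp
  have "emeasure lebesgue ((\<lambda>x. a n *\<^sub>R x + c n) ` Ns) = \<bar>a n\<bar> ^ DIM(real) * emeasure lebesgue Ns"
    by (rule emeasure_lebesgue_affine)
  then have "emeasure lebesgue (Li n -` Ns) = 0" using Ns(2) img by simp
  then have null: "Li n -` Ns \<in> null_sets lebesgue" using ms by auto
  have "AE y in lebesgue. Li n y \<notin> Ns" by (rule AE_I'[OF null]) auto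
  then have "AE y in lebesgue. y \<in> II \<longrightarrow> (y \<in> Ipart xs n \<longrightarrow> P (Li n y))"
  proof (rule eventually_mono)
    fix y assume y: "Li n y \<notin> Ns"
    show "y \<in> II \<longrightarrow> (y \<in> Ipart xs n \<longrightarrow> P (Li n y))"
    proof (intro impI)
      assume "y \<in> Ipart xs n"
      then have "Li n y \<in> II" by (rule Li_in[OF n])
      then show "P (Li n y)" using y Ns(1) by auto
    qed
  qed
  then show ?thesis using AE_restrict_space_iff[of II lebesgue] by simp
qed

lemma fp_point:
  assumes as: "\<forall>n\<in>{1..N}. y \<in> Ipart xs n \<longrightarrow> summable (\<lambda>k. vv f k (Li n y))"
  shows "(\<Sum>k. vv f k y) = f y + Aop (\<lambda>x. \<Sum>k. vv f k x) y"
proof -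
  define T where "T n k = indicator (Ipart xs n) y * (\<alpha> n (Li n y) * vv f k (Li n y))" for n k
  have vS: "vv f (Suc k) y = (\<Sum>n\<in>{1..N}. T n k)" for k by (simp add: vv_Suc Aop_def T_def)
  have sT: "summable (T n)" if n: "n \<in> {1..N}" for n
  proof (cases "y \<in> Ipart xs n")
    case True
    then have s: "summable (\<lambda>k. vv f k (Li n y))" using as n by auto
    show ?thesis unfolding T_def using True summable_mult[OF s, of "\<alpha> n (Li n y)"] by simp
  next
    case False then have "T n = (\<lambda>k. 0)" by (simp add: T_def fun_eq_iff)
    then show ?thesis by simp
  qed
  have sumT: "(\<Sum>k. \<Sum>n\<in>{1..N}. T n k) = (\<Sum>n\<in>{1..N}. \<Sum>k. T n k)" by (rule suminf_sum) (rule sT)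
  have sS: "summable (\<lambda>k. vv f (Suc k) y)" unfolding vS by (intro summable_sum sT)
  have sv: "summable (\<lambda>k. vv f k y)" using sS summable_Suc_iff by blast
  have "(\<Sum>k. vv f k y) = vv f 0 y + (\<Sum>k. vv f (Suc k) y)" using suminf_split_head[OF sv] by simp
  also have "(\<Sum>k. vv f (Suc k) y) = (\<Sum>n\<in>{1..N}. \<Sum>k. T n k)" unfolding vS using sumT by simp
  also have "\<dots> = Aop (\<lambda>x. \<Sum>k. vv f k x) y" unfolding Aop_def
  proof (rule sum.cong[OF refl])
    fix n assume n: "n \<in> {1..N}"
    show "(\<Sum>k. T n k) = indicator (Ipart xs n) y * (\<alpha> n (Li n y) * (\<Sum>k. vv f k (Li n y)))"
    proof (cases "y \<in> Ipart xs n")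
      case True
      then have s: "summable (\<lambda>k. vv f k (Li n y))" using as n by auto
      show ?thesis unfolding T_def using True suminf_mult[OF s, of "\<alpha> n (Li n y)"] by simp
    next
      case False then show ?thesis by (simp add: T_def)
    qed
  qed
  finally show ?thesis by simp
qed

lemma exists_fp: assumes f: "sqi MI f"
  shows "\<exists>g. sqi MI g \<and> (AE y in MI. g y = f y + Aop g y)"
proof -
  define H where "H K x = (\<Sum>k<K. \<bar>vv f k x\<bar>)" for K x
  define C where "C = (1/(1-\<Lambda>))\<^sup>2 * (LINT x|MI. (f x)\<^sup>2)"
  have sH: "sqi MI (H K)" and bH: "(LINT x|MI. (H K x)\<^sup>2) \<le> C" for K
    using H_bound[OF f, of K] by (auto simp: H_def[abs_def] C_def)
  define Fk where "Fk K x = ennreal ((H K x)\<^sup>2)" for K x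
  have Fm: "Fk K \<in> borel_measurable MI" for K
  proof -
    have hm: "H K \<in> borel_measurable MI" using sH[of K] by (simp add: sqi_def)
    have "(\<lambda>x. (H K x)\<^sup>2) \<in> borel_measurable MI" using hm by (rule borel_measurable_power)
    from measurable_compose[OF this measurable_ennreal] show ?thesis unfolding Fk_def[abs_def] .
  qed
  have inc: "incseq Fk"
  proof (rule incseq_SucI)
    fix K
    show "Fk K \<le> Fk (Suc K)"
    proof (rule le_funI)
      fix x
      have "0 \<le> H K x" "H K x \<le> H (Suc K) x" by (auto simp: H_def)
      then have "(H K x)\<^sup>2 \<le> (H (Suc K) x)\<^sup>2" by (intro power_mono) auto
      then show "Fk K x \<le> Fk (Suc K) x" by (simp add: Fk_def ennreal_leI)
    qed
  qed
  define Gs where "Gs x = (SUP K. Fk K x)" for x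
  have Gm: "Gs \<in> borel_measurable MI" unfolding Gs_def[abs_def]
    by (rule borel_measurable_SUP) (auto intro: Fm)
  have "(\<integral>\<^sup>+x. Gs x \<partial>MI) = (SUP K. \<integral>\<^sup>+x. Fk K x \<partial>MI)"
    unfolding Gs_def by (rule nn_integral_monotone_convergence_SUP[OF inc Fm])
  also have "\<dots> \<le> ennreal C"
  proof (rule SUP_least)
    fix K
    have "(\<integral>\<^sup>+x. Fk K x \<partial>MI) = ennreal (LINT x|MI. (H K x)\<^sup>2)"
      unfolding Fk_def by (rule sqi_int_eq[OF sH])
    also have "\<dots> \<le> ennreal C" using bH by (rule ennreal_leI)
    finally show "(\<integral>\<^sup>+x. Fk K x \<partial>MI) \<le> ennreal C" .
  qed
  finally have GI: "(\<integral>\<^sup>+x. Gs x \<partial>MI) \<le> ennreal C" .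
  have AEfin: "AE x in MI. Gs x \<noteq> \<infinity>"
    by (rule nn_integral_noteq_infinite[OF Gm]) (metis GI ennreal_neq_top neq_top_trans infinity_ennreal_def)
  define g where "g x = (\<Sum>k. vv f k x)" for x
  have good: "summable (\<lambda>k. vv f k x) \<and> ennreal ((g x)\<^sup>2) \<le> Gs x" if fin: "Gs x \<noteq> \<infinity>" for x
  proof -
    define R where "R = enn2real (Gs x)"
    have R0: "0 \<le> R" by (simp add: R_def)
    have GR: "Gs x = ennreal R" using fin by (simp add: R_def less_top)
    have HR: "(H K x)\<^sup>2 \<le> R" for K
    proof -
      have "ennreal ((H K x)\<^sup>2) \<le> Gs x" unfolding Gs_def Fk_def by (rule SUP_upper) auto
      then show ?thesis using GR R0 by (simp add: ennreal_le_iff)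
    qed
    have Hs: "H K x \<le> sqrt R" for K using real_le_rsqrt[OF HR] .
    have sa: "summable (\<lambda>k. \<bar>vv f k x\<bar>)"
      by (rule summableI_nonneg_bounded[where x="sqrt R"]) (use Hs in \<open>auto simp: H_def\<close>)
    have "\<bar>g x\<bar> \<le> (\<Sum>k. \<bar>vv f k x\<bar>)" unfolding g_def by (rule summable_rabs[OF sa])
    also have "\<dots> \<le> sqrt R" by (rule suminf_le_const[OF sa]) (use Hs in \<open>auto simp: H_def\<close>)
    finally have "\<bar>g x\<bar>\<^sup>2 \<le> (sqrt R)\<^sup>2" by (intro power_mono) auto
    then have "(g x)\<^sup>2 \<le> R" using R0 by simp
    then have "ennreal ((g x)\<^sup>2) \<le> Gs x" by (simp add: GR ennreal_leI)
    with summable_rabs_cancel[OF sa] show ?thesis by simp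
  qed
  have sv: "sqi MI (vv f k)" for k using vv_sqi[OF f] by auto
  have gm: "g \<in> borel_measurable MI" unfolding g_def[abs_def]
    by (rule borel_measurable_suminf) (use sv in \<open>auto simp: sqi_def\<close>)
  have "(\<integral>\<^sup>+x. ennreal ((g x)\<^sup>2) \<partial>MI) \<le> (\<integral>\<^sup>+x. Gs x \<partial>MI)"
    by (rule nn_integral_mono_AE) (use AEfin good in \<open>auto elim: eventually_mono\<close>)
  also have "\<dots> < \<infinity>" using GI by (simp add: le_less_trans)
  finally have sg: "sqi MI g" using gm by (subst sqi_nn) auto
  have AEZ: "AE x in MI. summable (\<lambda>k. vv f k x)" using AEfin good by (auto elim: eventually_mono)
  have "AE y in MI. \<forall>n\<in>{1..N}. y \<in> Ipart xs n \<longrightarrow> summable (\<lambda>k. vv f k (Li n y))"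
    using AE_transfer[OF _ AEZ] by (intro eventually_ball_finite) auto
  then have "AE y in MI. g y = f y + Aop g y"
    by (rule eventually_mono) (simp add: g_def[abs_def] fp_point)
  with sg show ?thesis by blast
qed

end



theorem proposition6p13:
  fixes N :: nat and xs a c :: "nat \<Rightarrow> real" and \<alpha> :: "nat \<Rightarrow> real \<Rightarrow> real"
    and \<Lambda> :: real and fs :: "nat \<Rightarrow> real \<Rightarrow> real"
  assumes "N \<ge> 2"
    and "strict_mono_on {0..N} xs"
    and "\<forall>n\<in>{1..N}. a n * xs 0 + c n = xs (n - 1) \<and> a n * xs N + c n = xs n"
    and "\<forall>n\<in>{1..N}. \<alpha> n \<in> borel_measurable (lebesgue_on {xs 0 .. xs N})"
    and "\<Lambda> < 1"
    and "AE y in lebesgue_on {xs 0 .. xs N}. \<forall>n\<in>{1..N}. \<bar>\<alpha> n y\<bar> \<le> \<Lambda>"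
    and "\<forall>m. L2 {xs 0 .. xs N} (fs m)"
    and "Bessel {xs 0 .. xs N} fs"
  shows "Bessel {xs 0 .. xs N} (\<lambda>m. fractal N xs a c \<alpha> (fs m) (\<lambda>_. 0))"
proof -
  define L' where "L' = max \<Lambda> (1/2)"
  have L'1: "0 < L'" "L' < 1" using assms(5) by (auto simp: L'_def)
  have bnd': "AE y in lebesgue_on {xs 0 .. xs N}. \<forall>n\<in>{1..N}. \<bar>\<alpha> n y\<bar> \<le> L'"
    using assms(6) by (rule eventually_mono) (auto simp: L'_def)
  interpret F: fsetup N xs a c \<alpha> L'
    using assms(1-4) L'1 bnd' by unfold_locales auto
  have Topeq: "Top N xs a c \<alpha> f (\<lambda>_. 0) g y = f y + F.Aop g y" for f g y
    by (simp add: Top_def F.Aop_def F.Li_def)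
  define gs where "gs m = fractal N xs a c \<alpha> (fs m) (\<lambda>_. 0)" for m
  have sf: "sqi (lebesgue_on {xs 0 .. xs N}) (fs m)" for m using assms(7) by (simp add: L2_sqi)
  have fpm: "sqi (lebesgue_on {xs 0 .. xs N}) (gs m) \<and>
      (AE y in lebesgue_on {xs 0 .. xs N}. gs m y = fs m y + F.Aop (gs m) y)" for m
  proof -
    have ex: "\<exists>g. L2 {xs 0 .. xs N} g \<and> (AE y in lebesgue_on {xs 0 .. xs N}. g y = Top N xs a c \<alpha> (fs m) (\<lambda>_. 0) g y)"
      using F.exists_fp[OF sf[of m]] by (simp add: L2_sqi Topeq)
    from someI_ex[OF ex] show ?thesis by (simp add: gs_def fractal_def L2_sqi Topeq)
  qed
  from assms(8) obtain B where B: "B > 0" and Bb: "\<And>h. sqi (lebesgue_on {xs 0 .. xs N}) h \<Longrightarrow>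
      summable (\<lambda>m. (LINT x|lebesgue_on {xs 0 .. xs N}. h x * fs m x)\<^sup>2) \<and>
      (\<Sum>m. (LINT x|lebesgue_on {xs 0 .. xs N}. h x * fs m x)\<^sup>2) \<le> B * (LINT x|lebesgue_on {xs 0 .. xs N}. h x * h x)"
    unfolding Bessel_def L2inner_def L2_sqi by blast
  have D: "(LINT x|lebesgue_on {xs 0 .. xs N}. (\<Sum>m<K. r m * gs m x)\<^sup>2) \<le> (1/(1-L'))\<^sup>2 * (LINT x|lebesgue_on {xs 0 .. xs N}. (\<Sum>m<K. r m * fs m x)\<^sup>2)" for K r
    using fpm sf by (intro F.comb_bound) auto
  have "B * (1/(1-L'))\<^sup>2 > 0" using B L'1 by simp
  moreover have "summable (\<lambda>m. (LINT x|lebesgue_on {xs 0 .. xs N}. h x * gs m x)\<^sup>2) \<and>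
         (\<Sum>m. (LINT x|lebesgue_on {xs 0 .. xs N}. h x * gs m x)\<^sup>2) \<le> (B * (1/(1-L'))\<^sup>2) * (LINT x|lebesgue_on {xs 0 .. xs N}. h x * h x)"
    if h: "sqi (lebesgue_on {xs 0 .. xs N}) h" for h
  proof -
    have sg: "sqi (lebesgue_on {xs 0 .. xs N}) (gs m)" for m using fpm by blast
    show ?thesis by (rule bessel_transfer[OF sf sg B Bb D h])
  qed
  ultimately show ?thesis unfolding Bessel_def L2inner_def L2_sqi gs_def[symmetric] by blast
qed



end
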